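(* For every $s\ge1$ and every $\mathbf{k}=(k_1,\dots,k_s)\in\mathbb{Z}_{\ge1}^s$, $$F_{\mathbf{k}}(t)=\sum_{\mathbf{w}\in W_{s-1}} F_{r_{\mathbf{w}}(\mathbf{k})*\tilde{\mathbf{w}}}(t)\cdot t^{|\mathbf{w}|}.$$
   Context: Ladder diagrams: $Q^+$ is the directed graph on $\mathbb{Z}_{\ge0}^2$ with edges $((i,j),(i,j+1))$ and $((i,j),(i+1,j))$. For a sequence $\mathbf{k}=(k_1,\dots,k_s)$ of positive integers with sum $n$, let $n_0=0$, $n_i=\sum_{j\le i}k_j$, $T_{\mathbf{k}}=\{(n_\ell,n-n_\ell):0\le\ell\le s\}$ (terminal vertices), and $\Gamma_{\mathbf{k}}$ the induced subgraph of $Q^+$ on $\{(a,b):a\le c,b\le d\text{ for some }(c,d)\in T_{\mathbf{k}}\}$. For a sequence of nonnegative integers, $\Gamma_{\mathbf{k}}$ is defined as $\Gamma$ of the subsequence of its positive entries (for the all-zero/empty sequence this is the single vertex $(0,0)$, which is also the unique terminal vertex). A positive path is a shortest directed path from $(0,0)$ to a terminal vertex; a face of $\Gamma_{\mathbf{k}}$ is a subgraph containing all terminal vertices which is a union of positive paths; its dimension is $\operatorname{rank}H_1$ of it as a 1-dimensional CW complex. The $f$-polynomial is $F_{\mathbf{k}}(t)=\sum_{\gamma}t^{\dim\gamma}$, summed over all faces $\gamma$ of $\Gamma_{\mathbf{k}}$. $W_{s-1}$ is the set of sequences $\mathbf{w}=((\alpha_1,\beta_1),\dots,(\alpha_{s-1},\beta_{s-1}))$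 with each $(\alpha_i,\beta_i)\in\{(1,0),(0,1),(1,1)\}$. Set $\alpha_s=\beta_0=1$. Define $r_{\mathbf{w}}(\mathbf{k})=(k''_1,\dots,k''_s)$ with $k''_i=k_i+1-\alpha_i-\beta_{i-1}$, $\tilde{\mathbf{w}}=(\alpha_1\beta_1,\dots,\alpha_{s-1}\beta_{s-1})$, and $|\mathbf{w}|=\sum_{i=1}^{s-1}\alpha_i\beta_i$. For $\mathbf{a}=(a_1,\dots,a_s)$ and $\mathbf{b}=(b_1,\dots,b_{s-1})$, $\mathbf{a}*\mathbf{b}=(a_1,b_1,a_2,b_2,\dots,a_{s-1},b_{s-1},a_s)$. *)

theory Defs
  imports "HOL-Computational_Algebra.Polynomial"
begin

type_synonym vert = "nat \<times> nat"

definition terminals_pos :: "nat list \<Rightarrow> vert set" where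
  "terminals_pos ks = {(sum_list (take l ks), sum_list ks - sum_list (take l ks)) | l. l \<le> length ks}"

definition terminals :: "nat list \<Rightarrow> vert set" where
  "terminals ks = terminals_pos (filter (\<lambda>x. 0 < x) ks)"

definition gverts :: "nat list \<Rightarrow> vert set" where
  "gverts ks = {(a, b). \<exists>(c, d) \<in> terminals ks. a \<le> c \<and> b \<le> d}"

definition qedge :: "vert \<Rightarrow> vert \<Rightarrow> bool" where
  "qedge u v \<longleftrightarrow> v = (fst u, Suc (snd u)) \<or> v = (Suc (fst u), snd u)"

definition gedges :: "nat list \<Rightarrow> (vert \<times> vert) set" where
  "gedges ks = {(u, v). u \<in> gverts ks \<and> v \<in> gverts ks \<and> qedge u v}"

definition path_edges :: "vert list \<Rightarrow> (vert \<times> vert) set" where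
  "path_edges p = set (zip p (tl p))"

(* directed path in Gamma_k from (0,0) to a terminal vertex; every directed path
   in Q^+ between two vertices is shortest, so these are exactly the positive paths *)
definition positive_path :: "nat list \<Rightarrow> vert list \<Rightarrow> bool" where
  "positive_path ks p \<longleftrightarrow> p \<noteq> [] \<and> hd p = (0, 0) \<and> last p \<in> terminals ks
     \<and> path_edges p \<subseteq> gedges ks"

definition faces :: "nat list \<Rightarrow> (vert set \<times> (vert \<times> vert) set) set" where
  "faces ks = {(V, E). \<exists>P. (\<forall>p\<in>P. positive_path ks p) \<and>
      V = (\<Union>p\<in>P. set p) \<and> E = (\<Union>p\<in>P. path_edges p) \<and> terminals ks \<subseteq> V}"

(* rank of H_1 of a finite graph as a 1-dim CW complex: |E| - |V| + #components *)
definition conn_rel :: "vert set \<Rightarrow> (vert \<times> vert) set \<Rightarrow> (vert \<times> vert) set" where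
  "conn_rel V E = (E \<union> E\<inverse>)\<^sup>* \<inter> (V \<times> V)"

definition h1_rank :: "vert set \<times> (vert \<times> vert) set \<Rightarrow> nat" where
  "h1_rank G = (case G of (V, E) \<Rightarrow>
      nat (int (card E) - int (card V) + int (card (V // conn_rel V E))))"

definition fpoly :: "nat list \<Rightarrow> int poly" where
  "fpoly ks = (\<Sum>\<gamma>\<in>faces ks. monom 1 (h1_rank \<gamma>))"

definition Wset :: "nat \<Rightarrow> (nat \<times> nat) list set" where
  "Wset m = {w. length w = m \<and> set w \<subseteq> {(1,0),(0,1),(1,1)}}"

(* alpha_i, beta_i with 1-based indices, alpha_s = 1, beta_0 = 1 *)
definition walpha :: "(nat \<times> nat) list \<Rightarrow> nat \<Rightarrow> nat" where
  "walpha w i = (if 1 \<le> i \<and> i \<le> length w then fst (w ! (i - 1)) else 1)"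

definition wbeta :: "(nat \<times> nat) list \<Rightarrow> nat \<Rightarrow> nat" where
  "wbeta w i = (if 1 \<le> i \<and> i \<le> length w then snd (w ! (i - 1)) else 1)"

definition rw :: "(nat \<times> nat) list \<Rightarrow> nat list \<Rightarrow> nat list" where
  "rw w ks = map (\<lambda>i. ks ! (i - 1) + 1 - walpha w i - wbeta w (i - 1)) [1..<Suc (length ks)]"

definition wtilde :: "(nat \<times> nat) list \<Rightarrow> nat list" where
  "wtilde w = map (\<lambda>(a, b). a * b) w"

definition wsize :: "(nat \<times> nat) list \<Rightarrow> nat" where
  "wsize w = sum_list (wtilde w)"

(* a * b = (a_1, b_1, ..., a_{s-1}, b_{s-1}, a_s) *)
fun interleave :: "nat list \<Rightarrow> nat list \<Rightarrow> nat list" where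
  "interleave (a # as) (b # bs) = a # b # interleave as bs"
| "interleave as [] = as"
| "interleave [] bs = []"

end

theory Submission
  imports Defs
begin


definition sm :: "vert \<Rightarrow> nat" where "sm v = fst v + snd v"

definition mpath :: "vert list \<Rightarrow> bool" where
  "mpath p \<longleftrightarrow> p \<noteq> [] \<and> hd p = (0,0) \<and> (\<forall>(u,v)\<in>path_edges p. qedge u v)"

lemma pe_Nil[simp]: "path_edges [] = {}" by (simp add: path_edges_def)
lemma pe_single[simp]: "path_edges [x] = {}" by (simp add: path_edges_def)
lemma pe_Cons2[simp]: "path_edges (x # y # r) = insert (x,y) (path_edges (y#r))"
  by (simp add: path_edges_def)
lemma pe_Cons: "q \<noteq> [] \<Longrightarrow> path_edges (x # q) = insert (x, hd q) (path_edges q)"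
  by (cases q) auto

lemma pe_snoc: "p \<noteq> [] \<Longrightarrow> path_edges (p @ [t]) = insert (last p, t) (path_edges p)"
proof (induction p)
  case Nil then show ?case by simp
next
  case (Cons x q)
  show ?case
  proof (cases "q = []")
    case True then show ?thesis by simp
  next
    case False
    then obtain y r where q: "q = y # r" by (cases q) auto
    have "path_edges ((x # q) @ [t]) = insert (x, y) (path_edges (q @ [t]))" by (simp add: q)
    also have "\<dots> = insert (x,y) (insert (last q, t) (path_edges q))" using Cons False by simp
    finally show ?thesis using False by (simp add: q insert_commute)
  qed
qed

lemma pe_set: "(u,v) \<in> path_edges p \<Longrightarrow> u \<in> set p \<and> v \<in> set p"
  unfolding path_edges_def
  by (cases p) (auto dest: set_zip_leftD set_zip_rightD)

lemma pe_set_butlast: "(u,v) \<in> path_edges p \<Longrightarrow> u \<in> set (butlast p)"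
proof (induction p rule: induct_list012)
  case (3 x y zs)
  then show ?case by (auto)
qed auto

lemma qedge_sm: "qedge u v \<Longrightarrow> sm v = Suc (sm u)"
  unfolding qedge_def sm_def by auto

lemma chain_sm: "\<forall>(u,v)\<in>path_edges p. qedge u v \<Longrightarrow> i < length p \<Longrightarrow> sm (p!i) = sm (hd p) + i"
proof (induction p arbitrary: i rule: induct_list012)
  case (3 x y zs)
  have q: "qedge x y" using "3.prems" by auto
  have ih: "\<And>i. i < length (y#zs) \<Longrightarrow> sm ((y#zs)!i) = sm y + i"
    using "3.IH"(2) "3.prems"(1) by auto
  show ?case
  proof (cases i)
    case 0 then show ?thesis by simp
  next
    case (Suc j) then show ?thesis using ih[of j] "3.prems"(2) qedge_sm[OF q] by simp
  qed
qed auto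

lemma mpath_sm: "mpath p \<Longrightarrow> i < length p \<Longrightarrow> sm (p!i) = i"
  using chain_sm[of p i] unfolding mpath_def by (simp add: sm_def)

lemma mpath_last_sm: "mpath p \<Longrightarrow> sm (last p) = length p - 1"
  using mpath_sm[of p "length p - 1"] unfolding mpath_def by (simp add: last_conv_nth)

lemma mpath_set_sm: "mpath p \<Longrightarrow> v \<in> set p \<Longrightarrow> sm v \<le> sm (last p) \<and> (sm v = sm (last p) \<longrightarrow> v = last p)"
proof -
  assume m: "mpath p" and v: "v \<in> set p"
  then obtain i where i: "i < length p" "v = p!i" by (auto simp: in_set_conv_nth)
  have "sm v = i" using mpath_sm[OF m i(1)] i by simp
  moreover have "sm (last p) = length p - 1" using mpath_last_sm[OF m] .
  moreover have "p \<noteq> []" using m mpath_def by auto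
  ultimately show ?thesis using i by (auto simp: last_conv_nth)
qed

lemma chain_le: "\<forall>(u,v)\<in>path_edges p. qedge u v \<Longrightarrow> v \<in> set p \<Longrightarrow> fst v \<le> fst (last p) \<and> snd v \<le> snd (last p)"
proof (induction p arbitrary: v rule: induct_list012)
  case (3 x y zs)
  have q: "qedge x y" using "3.prems" by auto
  have ih: "\<And>v. v \<in> set (y#zs) \<Longrightarrow> fst v \<le> fst (last (y#zs)) \<and> snd v \<le> snd (last (y#zs))"
    using "3.IH"(2) "3.prems"(1) by auto
  have "fst x \<le> fst y \<and> snd x \<le> snd y" using q unfolding qedge_def by auto
  then show ?case using ih[of v] ih[of y] "3.prems"(2) by (auto)
qed auto

lemma chain_conn: "v \<in> set p \<Longrightarrow> (hd p, v) \<in> (path_edges p)\<^sup>*"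
proof (induction p arbitrary: v rule: induct_list012)
  case (3 x y zs)
  have sub: "(path_edges (y#zs))\<^sup>* \<subseteq> (path_edges (x#y#zs))\<^sup>*"
    by (rule rtrancl_mono) auto
  show ?case
  proof (cases "v = x")
    case False
    then have "v \<in> set (y#zs)" using "3.prems" by auto
    then have "(y, v) \<in> (path_edges (y#zs))\<^sup>*" using "3.IH"(2) by simp
    then have "(y, v) \<in> (path_edges (x#y#zs))\<^sup>*" using sub by blast
    then show ?thesis by (auto intro: converse_rtrancl_into_rtrancl)
  qed simp
qed auto

lemma chain_in: "v \<in> set p \<Longrightarrow> v \<noteq> hd p \<Longrightarrow> \<exists>u. (u,v) \<in> path_edges p"
proof (induction p arbitrary: v rule: induct_list012)
  case (3 x y zs)
  show ?case
  proof (cases "v = y")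
    case True
    have "(x, v) \<in> path_edges (x#y#zs)" using True by simp
    then show ?thesis by blast
  next
    case False
    then have "\<exists>u. (u,v) \<in> path_edges (y#zs)" using 3 by auto
    then show ?thesis by auto
  qed
qed auto




definition facesT :: "vert set \<Rightarrow> (vert set \<times> (vert \<times> vert) set) set" where
  "facesT T = {(V,E). \<exists>P. (\<forall>p\<in>P. mpath p \<and> last p \<in> T) \<and> V = (\<Union>p\<in>P. set p)
      \<and> E = (\<Union>p\<in>P. path_edges p) \<and> T \<subseteq> V}"

definition fpolyT :: "vert set \<Rightarrow> int poly" where
  "fpolyT T = (\<Sum>\<gamma>\<in>facesT T. monom 1 (h1_rank \<gamma>))"

definition anti :: "nat \<Rightarrow> vert set \<Rightarrow> bool" where
  "anti m T \<longleftrightarrow> (\<forall>t\<in>T. sm t = m)"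

definition into :: "vert set \<Rightarrow> (vert \<times> vert) set" where
  "into T = {e. snd e \<in> T}"

definition inedges :: "vert set \<Rightarrow> (vert \<times> vert) set" where
  "inedges T = {(u,v). v \<in> T \<and> qedge u v}"

definition Xset :: "vert set \<Rightarrow> (vert \<times> vert) set set" where
  "Xset T = {X. X \<subseteq> inedges T \<and> (\<forall>t\<in>T. \<exists>u. (u,t) \<in> X)}"

lemma positive_path_iff: "positive_path ks p \<longleftrightarrow> mpath p \<and> last p \<in> terminals ks"
proof
  assume "positive_path ks p"
  then show "mpath p \<and> last p \<in> terminals ks"
    unfolding positive_path_def mpath_def gedges_def by auto
next
  assume a: "mpath p \<and> last p \<in> terminals ks"
  have "path_edges p \<subseteq> gedges ks"
  proof
    fix e assume e: "e \<in> path_edges p"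
    obtain u v where uv: "e = (u,v)" by (cases e)
    have ch: "\<forall>(u,v)\<in>path_edges p. qedge u v" using a mpath_def by auto
    have "u \<in> set p" "v \<in> set p" using pe_set e uv by auto
    have gv: "x \<in> gverts ks" if "x \<in> set p" for x
    proof -
      have le: "fst x \<le> fst (last p) \<and> snd x \<le> snd (last p)" using chain_le[OF ch that] .
      obtain c d where cd: "last p = (c,d)" by (cases "last p")
      obtain x1 x2 where xx: "x = (x1,x2)" by (cases x)
      show ?thesis unfolding gverts_def using le a cd xx by auto
    qed
    have "u \<in> gverts ks" "v \<in> gverts ks" using gv \<open>u \<in> set p\<close> \<open>v \<in> set p\<close> by auto
    then show "e \<in> gedges ks" using ch e uv unfolding gedges_def by auto
  qed
  then show "positive_path ks p" using a unfolding positive_path_def mpath_def by auto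
qed

lemma faces_eq: "faces ks = facesT (terminals ks)"
  unfolding faces_def facesT_def positive_path_iff by simp

lemma fpoly_eq: "fpoly ks = fpolyT (terminals ks)"
  unfolding fpoly_def fpolyT_def faces_eq ..

lemma face_props:
  assumes "(V,E) \<in> facesT C" "anti m C"
  shows "\<forall>v\<in>V. sm v \<le> m" "\<forall>(u,v)\<in>E. qedge u v \<and> u \<in> V \<and> v \<in> V"
proof -
  obtain P where P: "\<forall>p\<in>P. mpath p \<and> last p \<in> C" "V = (\<Union>p\<in>P. set p)"
    "E = (\<Union>p\<in>P. path_edges p)" "C \<subseteq> V"
    using assms(1) unfolding facesT_def by auto
  show "\<forall>v\<in>V. sm v \<le> m"
    using P(1,2) assms(2) mpath_set_sm unfolding anti_def by fastforce
  show "\<forall>(u,v)\<in>E. qedge u v \<and> u \<in> V \<and> v \<in> V"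
    using P(1,2,3) pe_set unfolding mpath_def by fastforce
qed

lemma box_finite: "finite {v::vert. sm v \<le> m}"
proof -
  have "{v::vert. sm v \<le> m} \<subseteq> {0..m} \<times> {0..m}" by (auto simp: sm_def)
  then show ?thesis by (rule finite_subset) simp
qed

lemma anti_finite: "anti m T \<Longrightarrow> finite T"
  by (rule finite_subset[OF _ box_finite[of m]]) (auto simp: anti_def)

lemma face_finite:
  assumes "(V,E) \<in> facesT C" "anti m C"
  shows "finite V" "finite E"
proof -
  show fV: "finite V" using face_props(1)[OF assms] by (intro finite_subset[OF _ box_finite[of m]]) auto
  have "E \<subseteq> V \<times> V" using face_props(2)[OF assms] by auto
  then show "finite E" using fV by (meson finite_SigmaI finite_subset)
qed

lemma facesT_finite:
  assumes "anti m C" shows "finite (facesT C)"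
proof -
  let ?B = "{v::vert. sm v \<le> m}"
  have "facesT C \<subseteq> Pow ?B \<times> Pow (?B \<times> ?B)"
  proof
    fix g assume g: "g \<in> facesT C"
    obtain V E where VE: "g = (V,E)" by (cases g)
    have a: "\<forall>v\<in>V. sm v \<le> m" "\<forall>(u,v)\<in>E. qedge u v \<and> u \<in> V \<and> v \<in> V"
      using face_props[OF g[unfolded VE] assms] by auto
    have "V \<subseteq> ?B" using a(1) by auto
    moreover have "E \<subseteq> ?B \<times> ?B" using a by auto
    ultimately show "g \<in> Pow ?B \<times> Pow (?B \<times> ?B)" using VE by auto
  qed
  then show ?thesis by (rule finite_subset) (simp add: box_finite)
qed

lemma face_h1:
  assumes "(V,E) \<in> facesT C" "anti m C" "C \<noteq> {}"
  shows "card V \<le> card E + 1" "h1_rank (V,E) = card E + 1 - card V"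
proof -
  obtain P where P: "\<forall>p\<in>P. mpath p \<and> last p \<in> C" "V = (\<Union>p\<in>P. set p)"
    "E = (\<Union>p\<in>P. path_edges p)" "C \<subseteq> V"
    using assms(1) unfolding facesT_def by auto
  have fV: "finite V" and fE: "finite E" using face_finite[OF assms(1,2)] by auto
  obtain c where "c \<in> C" using assms(3) by auto
  then obtain p0 where "p0 \<in> P" using P by auto
  then have "mpath p0" using P(1) by auto
  then have "(0,0) \<in> set p0" unfolding mpath_def by (metis hd_in_set)
  then have o: "(0,0) \<in> V" using P(2) \<open>p0 \<in> P\<close> by auto
  have conn: "((0,0), v) \<in> E\<^sup>*" if vV: "v \<in> V" for v
  proof -
    obtain p where p: "p \<in> P" "v \<in> set p" using vV P(2) by auto
    have "(hd p, v) \<in> (path_edges p)\<^sup>*" using chain_conn p(2) .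
    moreover have "hd p = (0,0)" using P(1) p(1) unfolding mpath_def by auto
    moreover have "(path_edges p)\<^sup>* \<subseteq> E\<^sup>*" using P(3) p(1) by (intro rtrancl_mono) auto
    ultimately show ?thesis by auto
  qed
  let ?R = "E \<union> E\<inverse>"
  have symR: "sym (?R\<^sup>*)" by (intro sym_rtrancl) (auto simp: sym_def)
  have sub: "E\<^sup>* \<subseteq> ?R\<^sup>*" by (intro rtrancl_mono) auto
  have cr: "conn_rel V E = V \<times> V"
  proof
    show "conn_rel V E \<subseteq> V \<times> V" unfolding conn_rel_def by auto
  next
    show "V \<times> V \<subseteq> conn_rel V E"
    proof
      fix x assume x: "x \<in> V \<times> V"
      obtain u v where uv: "x = (u,v)" by (cases x)
      have "u \<in> V" "v \<in> V" using x uv by auto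
      then have "((0,0),u) \<in> ?R\<^sup>*" "((0,0),v) \<in> ?R\<^sup>*" using conn sub by blast+
      then have "(u,(0,0)) \<in> ?R\<^sup>*" using symR by (meson symD)
      then have "(u,v) \<in> ?R\<^sup>*" using \<open>((0,0),v) \<in> ?R\<^sup>*\<close> by (meson rtrancl_trans)
      then show "x \<in> conn_rel V E" using x uv unfolding conn_rel_def by auto
    qed
  qed
  have q: "V // conn_rel V E = {V}"
    unfolding cr quotient_def using o by auto
  have "V - {(0,0)} \<subseteq> snd ` E"
  proof
    fix v assume v: "v \<in> V - {(0,0)}"
    obtain p where p: "p \<in> P" "v \<in> set p" using v P(2) by auto
    have "hd p = (0,0)" using P(1) p(1) unfolding mpath_def by auto
    then obtain u where "(u,v) \<in> path_edges p" using chain_in[OF p(2)] v by auto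
    then show "v \<in> snd ` E" using P(3) p(1) by force
  qed
  then have "card (V - {(0,0)}) \<le> card E"
    using fE by (meson card_image_le card_mono finite_imageI order_trans)
  moreover have "card V = card (V - {(0,0)}) + 1" using o fV
    by (metis Suc_eq_plus1 card_Suc_Diff1)
  ultimately show le: "card V \<le> card E + 1" by simp
  show "h1_rank (V,E) = card E + 1 - card V"
    unfolding h1_rank_def using q le by auto
qed




lemma mpath_butlast:
  assumes m: "mpath p" and l: "length p \<ge> 2"
  shows "mpath (butlast p)" "butlast p \<noteq> []"
    "path_edges p = insert (last (butlast p), last p) (path_edges (butlast p))"
    "set p = insert (last p) (set (butlast p))"
proof -
  have ne: "p \<noteq> []" using m mpath_def by auto
  have bl: "p = butlast p @ [last p]" using ne by simp
  show bne: "butlast p \<noteq> []" using l by (cases p) auto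
  have pe: "path_edges p = insert (last (butlast p), last p) (path_edges (butlast p))"
    using pe_snoc[OF bne, of "last p"] bl by simp
  then show "path_edges p = insert (last (butlast p), last p) (path_edges (butlast p))" .
  have "hd (butlast p) = hd p" using bne by (metis bl hd_append2)
  then show "mpath (butlast p)" using m bne pe unfolding mpath_def by auto
  show "set p = insert (last p) (set (butlast p))" using bl
    by (metis Un_insert_right append_Nil2 list.set(2) set_append)
qed

lemma i_in:
  assumes an: "anti (Suc m) T" and f: "(V,E) \<in> facesT T"
  shows "E \<inter> into T \<in> Xset T" "(V - T, E - into T) \<in> facesT (fst ` (E \<inter> into T))"
proof -
  obtain P where P: "\<forall>p\<in>P. mpath p \<and> last p \<in> T" "V = (\<Union>p\<in>P. set p)"
    "E = (\<Union>p\<in>P. path_edges p)" "T \<subseteq> V"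
    using f unfolding facesT_def by auto
  let ?X = "E \<inter> into T"
  have mpP: "mpath p" "last p \<in> T" if "p \<in> P" for p using P(1) that by auto
  have smT: "sm t = Suc m" if "t \<in> T" for t using an that unfolding anti_def by blast
  have len: "length p = Suc (Suc m)" if "p \<in> P" for p
  proof -
    have "sm (last p) = Suc m" using smT mpP(2)[OF that] by blast
    moreover have "p \<noteq> []" using mpP(1)[OF that] unfolding mpath_def by blast
    ultimately show ?thesis using mpath_last_sm[OF mpP(1)[OF that]] by simp
  qed
  have len2: "length p \<ge> 2" if "p \<in> P" for p using len[OF that] by simp
  have mb: "mpath (butlast p)" if "p \<in> P" for p using mpath_butlast(1)[OF mpP(1)[OF that] len2[OF that]] .
  have bsm: "sm x \<le> m" if "p \<in> P" "x \<in> set (butlast p)" for p x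
  proof -
    have "sm (last (butlast p)) = length p - 2" using mpath_last_sm[OF mb[OF that(1)]] by simp
    then have "sm (last (butlast p)) = m" using len[OF that(1)] by simp
    then show ?thesis using mpath_set_sm[OF mb[OF that(1)] that(2)] by simp
  qed
  have notT: "x \<notin> T" if "p \<in> P" "x \<in> set (butlast p)" for p x
  proof
    assume "x \<in> T"
    then have "sm x = Suc m" using smT by blast
    then show False using bsm[OF that] by simp
  qed
  have setb: "set p - T = set (butlast p)" if "p \<in> P" for p
  proof -
    have "set p = insert (last p) (set (butlast p))"
      using mpath_butlast(4)[OF mpP(1)[OF that] len2[OF that]] .
    then show ?thesis using mpP(2)[OF that] notT[OF that] by auto
  qed
  have edb: "path_edges p - into T = path_edges (butlast p)" if "p \<in> P" for p
  proof -
    have nt: "snd e \<notin> T" if "e \<in> path_edges (butlast p)" for e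
    proof -
      obtain u v where uv: "e = (u,v)" by (cases e)
      have "v \<in> set (butlast p)" using pe_set[of u v "butlast p"] that uv by blast
      then show ?thesis using notT[OF \<open>p \<in> P\<close>] uv by simp
    qed
    have "path_edges p = insert (last (butlast p), last p) (path_edges (butlast p))"
      using mpath_butlast(3)[OF mpP(1)[OF that] len2[OF that]] .
    then show ?thesis using nt mpP(2)[OF that] unfolding into_def by auto
  qed
  have lastX: "(last (butlast p), last p) \<in> ?X" if "p \<in> P" for p
  proof -
    have "(last (butlast p), last p) \<in> path_edges p"
      using mpath_butlast(3)[OF mpP(1)[OF that] len2[OF that]] by blast
    then have "(last (butlast p), last p) \<in> E" using P(3) that by blast
    then show ?thesis using mpP(2)[OF that] unfolding into_def by simp
  qed
  have ed: "qedge u v" if uvE: "(u,v) \<in> E" for u v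
  proof -
    obtain p where "p \<in> P" "(u,v) \<in> path_edges p" using uvE P(3) by blast
    then show ?thesis using mpP(1) unfolding mpath_def by blast
  qed
  show "?X \<in> Xset T"
  proof -
    have "?X \<subseteq> inedges T" using ed unfolding into_def inedges_def by auto
    moreover have "\<exists>u. (u,t) \<in> ?X" if t: "t \<in> T" for t
    proof -
      obtain p where p: "p \<in> P" "t \<in> set p" using t P(2,4) by blast
      have "sm t = sm (last p)" using smT t mpP(2)[OF p(1)] by simp
      then have "t = last p" using mpath_set_sm[OF mpP(1)[OF p(1)] p(2)] by simp
      then show ?thesis using lastX[OF p(1)] by blast
    qed
    ultimately show ?thesis unfolding Xset_def by blast
  qed
  show "(V - T, E - into T) \<in> facesT (fst ` ?X)"
    unfolding facesT_def
  proof (clarsimp, intro exI conjI)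
    show "\<forall>p\<in>butlast ` P. mpath p \<and> last p \<in> fst ` ?X"
    proof
      fix q assume "q \<in> butlast ` P"
      then obtain p where p: "p \<in> P" "q = butlast p" by blast
      have "last q \<in> fst ` ?X" using lastX[OF p(1)] p(2) by force
      then show "mpath q \<and> last q \<in> fst ` ?X" using mb[OF p(1)] p(2) by simp
    qed
    show "V - T = (\<Union>p\<in>butlast ` P. set p)" using P(2) setb by auto
    show "E - into T = (\<Union>p\<in>butlast ` P. path_edges p)" using P(3) edb by auto
    show "fst ` ?X \<subseteq> V - T"
    proof
      fix u assume "u \<in> fst ` ?X"
      then obtain t where ut: "(u,t) \<in> E" "t \<in> T" unfolding into_def by auto
      obtain p where "p \<in> P" "(u,t) \<in> path_edges p" using ut(1) P(3) by blast
      then have "u \<in> V" using P(2) pe_set by blast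
      moreover have "sm t = Suc (sm u)" using ed[OF ut(1)] qedge_sm by blast
      then have "u \<notin> T" using smT[of u] smT[OF ut(2)] by auto
      ultimately show "u \<in> V - T" by blast
    qed
  qed
qed

lemma anti_X: "anti (Suc m) T \<Longrightarrow> X \<in> Xset T \<Longrightarrow> anti m (fst ` X)"
  unfolding anti_def Xset_def inedges_def using qedge_sm by fastforce

lemma j_in:
  assumes an: "anti (Suc m) T" and X: "X \<in> Xset T" and f: "(V',E') \<in> facesT (fst ` X)"
  shows "(V' \<union> T, E' \<union> X) \<in> facesT T"
proof -
  obtain P' where P: "\<forall>p\<in>P'. mpath p \<and> last p \<in> fst ` X" "V' = (\<Union>p\<in>P'. set p)"
    "E' = (\<Union>p\<in>P'. path_edges p)" "fst ` X \<subseteq> V'"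
    using f unfolding facesT_def by auto
  have an': "anti m (fst ` X)" using anti_X[OF an X] .
  have Xi: "X \<subseteq> inedges T" "\<forall>t\<in>T. \<exists>u. (u,t) \<in> X" using X unfolding Xset_def by auto
  have key: "\<exists>p\<in>P'. last p = u" if uX: "u \<in> fst ` X" for u
  proof -
    obtain p where p: "p \<in> P'" "u \<in> set p" using uX P(2,4) by auto
    have lp: "last p \<in> fst ` X" using P(1) p(1) by blast
    have "sm u = m" using an' uX unfolding anti_def by blast
    moreover have "sm (last p) = m" using an' lp unfolding anti_def by blast
    ultimately have "u = last p" using mpath_set_sm[of p u] P(1) p by auto
    then show ?thesis using p by auto
  qed
  define P where "P = {p @ [t] | p t. p \<in> P' \<and> (last p, t) \<in> X}"
  have ne: "p \<noteq> []" if "p \<in> P'" for p using P(1) that unfolding mpath_def by auto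
  have mp: "mpath (p @ [t]) \<and> last (p @ [t]) \<in> T" if "p \<in> P'" "(last p, t) \<in> X" for p t
  proof -
    have q: "qedge (last p) t" "t \<in> T" using Xi(1) that(2) unfolding inedges_def by auto
    show ?thesis using P(1) that(1) ne[OF that(1)] pe_snoc[OF ne[OF that(1)], of t] q
      unfolding mpath_def by auto
  qed
  have XT: "t \<in> T" if "(u,t) \<in> X" for u t using Xi(1) that unfolding inedges_def by auto
  show ?thesis
    unfolding facesT_def
  proof (clarsimp, intro exI[of _ P] conjI)
    show "\<forall>p\<in>P. mpath p \<and> last p \<in> T" unfolding P_def using mp by auto
    show "V' \<union> T = \<Union> (set ` P)"
    proof
      show "V' \<union> T \<subseteq> \<Union> (set ` P)"
      proof
        fix v assume v: "v \<in> V' \<union> T"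
        show "v \<in> \<Union> (set ` P)"
        proof (cases "v \<in> V'")
          case True
          then obtain p where p: "p \<in> P'" "v \<in> set p" using P(2) by auto
          obtain t where "(last p, t) \<in> X" using P(1) p(1) by force
          then have "p @ [t] \<in> P" using p(1) unfolding P_def by blast
          moreover have "v \<in> set (p @ [t])" using p(2) by simp
          ultimately show ?thesis by blast
        next
          case False
          then have vT: "v \<in> T" using v by auto
          then obtain u where u: "(u,v) \<in> X" using Xi(2) by auto
          then obtain p where p: "p \<in> P'" "last p = u" using key[of u] by force
          then have "p @ [v] \<in> P" using u unfolding P_def by blast
          moreover have "v \<in> set (p @ [v])" by simp
          ultimately show ?thesis by blast
        qed
      qed
      show "\<Union> (set ` P) \<subseteq> V' \<union> T"
      proof
        fix v assume "v \<in> \<Union> (set ` P)"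
        then obtain p t where pt: "p \<in> P'" "(last p, t) \<in> X" "v \<in> set (p @ [t])"
          unfolding P_def by blast
        have "t \<in> T" using XT[OF pt(2)] .
        moreover have "set p \<subseteq> V'" using P(2) pt(1) by blast
        ultimately show "v \<in> V' \<union> T" using pt(3) by auto
      qed
    qed
    show "E' \<union> X = \<Union> (path_edges ` P)"
    proof
      show "E' \<union> X \<subseteq> \<Union> (path_edges ` P)"
      proof
        fix e assume e: "e \<in> E' \<union> X"
        show "e \<in> \<Union> (path_edges ` P)"
        proof (cases "e \<in> E'")
          case True
          then obtain p where p: "p \<in> P'" "e \<in> path_edges p" using P(3) by auto
          obtain t where "(last p, t) \<in> X" using P(1) p(1) by force
          then have "p @ [t] \<in> P" using p(1) unfolding P_def by blast
          moreover have "e \<in> path_edges (p @ [t])" using p(2) pe_snoc[OF ne[OF p(1)], of t] by simp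
          ultimately show ?thesis by blast
        next
          case False
          then obtain u v where uv: "e = (u,v)" "(u,v) \<in> X" using e by (cases e) auto
          then obtain p where p: "p \<in> P'" "last p = u" using key[of u] by force
          then have "p @ [v] \<in> P" using uv unfolding P_def by blast
          moreover have "e \<in> path_edges (p @ [v])" using pe_snoc[OF ne[OF p(1)], of v] p uv by simp
          ultimately show ?thesis by blast
        qed
      qed
      show "\<Union> (path_edges ` P) \<subseteq> E' \<union> X" unfolding P_def using P(3) pe_snoc ne by fastforce
    qed
  qed
qed




lemma ij:
  assumes an: "anti (Suc m) T" and X: "X \<in> Xset T" and f: "(V',E') \<in> facesT (fst ` X)"
  shows "(E' \<union> X) \<inter> into T = X" "(V' \<union> T) - T = V'" "(E' \<union> X) - into T = E'"
    "V' \<inter> T = {}" "E' \<inter> X = {}"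
proof -
  have an': "anti m (fst ` X)" using anti_X[OF an X] .
  note fp = face_props[OF f an']
  have VT: "V' \<inter> T = {}" using fp(1) an unfolding anti_def by fastforce
  have E'i: "E' \<inter> into T = {}" using fp(2) VT unfolding into_def by fastforce
  have Xi: "X \<subseteq> into T" using X unfolding Xset_def inedges_def into_def by auto
  show "(E' \<union> X) \<inter> into T = X" using E'i Xi by auto
  show "(V' \<union> T) - T = V'" using VT by auto
  show "(E' \<union> X) - into T = E'" using E'i Xi by auto
  show "V' \<inter> T = {}" using VT .
  show "E' \<inter> X = {}" using E'i Xi by auto
qed

lemma h1_j:
  assumes an: "anti (Suc m) T" and X: "X \<in> Xset T" and f: "(V',E') \<in> facesT (fst ` X)"
    and ne: "T \<noteq> {}"
  shows "h1_rank (V' \<union> T, E' \<union> X) = h1_rank (V',E') + (card X - card T)"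
proof -
  have an': "anti m (fst ` X)" using anti_X[OF an X] .
  have f2: "(V' \<union> T, E' \<union> X) \<in> facesT T" using j_in[OF an X f] .
  have TX: "T \<subseteq> snd ` X" using X unfolding Xset_def by force
  have ne': "fst ` X \<noteq> {}" using TX ne by auto
  note h1 = face_h1[OF f an' ne'] and h2 = face_h1[OF f2 an ne]
  have fin: "finite V'" "finite E'" using face_finite[OF f an'] by auto
  have fin2: "finite (V' \<union> T)" "finite (E' \<union> X)" using face_finite[OF f2 an] by auto
  then have fT: "finite T" and fX: "finite X" by auto
  have cT: "card T \<le> card X" using TX fX by (meson card_image_le card_mono finite_imageI order_trans)
  have cV: "card (V' \<union> T) = card V' + card T" using fin fT ij(4)[OF an X f] by (simp add: card_Un_disjoint)
  have cE: "card (E' \<union> X) = card E' + card X" using fin fX ij(5)[OF an X f] by (simp add: card_Un_disjoint)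
  show ?thesis using h1 h2 cV cE cT by simp
qed

lemma Xset_finite: "anti (Suc m) T \<Longrightarrow> finite (Xset T)"
proof -
  assume an: "anti (Suc m) T"
  let ?B = "{v::vert. sm v \<le> Suc m}"
  have "inedges T \<subseteq> ?B \<times> ?B" using an qedge_sm unfolding inedges_def anti_def by fastforce
  then have "finite (inedges T)" by (rule finite_subset) (simp add: box_finite)
  moreover have "Xset T \<subseteq> Pow (inedges T)" unfolding Xset_def by auto
  ultimately show ?thesis by (meson finite_Pow_iff finite_subset)
qed

lemma decomp:
  assumes an: "anti (Suc m) T" and ne: "T \<noteq> {}"
  shows "fpolyT T = (\<Sum>X\<in>Xset T. fpolyT (fst ` X) * monom 1 (card X - card T))"
proof -
  define jm where "jm = (\<lambda>z::(vert \<times> vert) set \<times> (vert set \<times> (vert \<times> vert) set).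
     (fst (snd z) \<union> T, snd (snd z) \<union> fst z))"
  define im where "im = (\<lambda>g::vert set \<times> (vert \<times> vert) set. (snd g \<inter> into T, (fst g - T, snd g - into T)))"
  let ?S = "Sigma (Xset T) (\<lambda>X. facesT (fst ` X))"
  let ?g = "\<lambda>z::(vert \<times> vert) set \<times> (vert set \<times> (vert \<times> vert) set).
     (monom 1 (h1_rank (snd z) + (card (fst z) - card T)) :: int poly)"
  have "sum ?g ?S = fpolyT T"
    unfolding fpolyT_def
  proof (rule sum.reindex_bij_witness[of _ im jm])
    fix a assume a: "a \<in> ?S"
    obtain X V E where aa: "a = (X,(V,E))" by (cases a) auto
    have X: "X \<in> Xset T" and f: "(V,E) \<in> facesT (fst ` X)" using a aa by auto
    show "im (jm a) = a" unfolding im_def jm_def aa using ij[OF an X f] by simp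
    show "jm a \<in> facesT T" unfolding jm_def aa using j_in[OF an X f] by simp
    show "monom 1 (h1_rank (jm a)) = ?g a" unfolding jm_def aa using h1_j[OF an X f ne] by simp
  next
    fix b assume b: "b \<in> facesT T"
    obtain V E where bb: "b = (V,E)" by (cases b)
    have TV: "T \<subseteq> V" using b bb unfolding facesT_def by auto
    show "jm (im b) = b" unfolding jm_def im_def bb using TV by auto
    show "im b \<in> ?S" unfolding im_def bb using i_in[OF an b[unfolded bb]] by auto
  qed
  moreover have "sum ?g ?S = (\<Sum>X\<in>Xset T. \<Sum>\<gamma>\<in>facesT (fst ` X). ?g (X,\<gamma>))"
  proof -
    have "\<forall>X\<in>Xset T. finite (facesT (fst ` X))" using facesT_finite anti_X[OF an] by blast
    then show ?thesis
      using sum.Sigma[of "Xset T" "\<lambda>X. facesT (fst ` X)" "\<lambda>X \<gamma>. ?g (X,\<gamma>)", symmetric]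
        Xset_finite[OF an] by (simp add: split_def)
  qed
  moreover have "\<And>X. (\<Sum>\<gamma>\<in>facesT (fst ` X). ?g (X,\<gamma>)) = fpolyT (fst ` X) * monom 1 (card X - card T)"
    unfolding fpolyT_def sum_distrib_right by (simp add: mult_monom)
  ultimately show ?thesis by simp
qed




definition PS :: "nat list \<Rightarrow> nat set" where
  "PS xs = {sum_list (take l xs) | l. l \<le> length xs}"

lemma PS_Nil[simp]: "PS [] = {0}" unfolding PS_def by auto

lemma PS_Cons: "PS (x # xs) = insert 0 ((+) x ` PS xs)"
proof
  show "PS (x # xs) \<subseteq> insert 0 ((+) x ` PS xs)"
  proof
    fix y assume "y \<in> PS (x # xs)"
    then obtain l where l: "l \<le> Suc (length xs)" "y = sum_list (take l (x # xs))" unfolding PS_def by auto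
    show "y \<in> insert 0 ((+) x ` PS xs)"
    proof (cases l)
      case 0 then show ?thesis using l by simp
    next
      case (Suc j) then show ?thesis using l unfolding PS_def by auto
    qed
  qed
next
  show "insert 0 ((+) x ` PS xs) \<subseteq> PS (x # xs)"
  proof
    fix y assume "y \<in> insert 0 ((+) x ` PS xs)"
    then consider "y = 0" | j where "j \<le> length xs" "y = x + sum_list (take j xs)"
      unfolding PS_def by auto
    then show "y \<in> PS (x # xs)"
    proof cases
      case 1 then show ?thesis unfolding PS_def by (auto intro!: exI[of _ 0])
    next
      case 2 then show ?thesis unfolding PS_def by (auto intro!: exI[of _ "Suc j"])
    qed
  qed
qed

lemma zero_PS: "0 \<in> PS xs" unfolding PS_def by (auto intro!: exI[of _ 0])

lemma PS_filter: "PS (filter (\<lambda>x. 0 < x) xs) = PS xs"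
proof (induction xs)
  case Nil then show ?case by simp
next
  case (Cons x xs)
  show ?case
  proof (cases "x = 0")
    case True
    then show ?thesis using Cons zero_PS[of xs] by (simp add: PS_Cons insert_absorb)
  next
    case False
    then show ?thesis using Cons by (simp add: PS_Cons)
  qed
qed

lemma sum_filter: "sum_list (filter (\<lambda>x. 0 < x) xs) = sum_list (xs :: nat list)"
  by (induction xs) (auto simp: not_gr0)

lemma terminals_pos_PS: "terminals_pos ks = (\<lambda>x. (x, sum_list ks - x)) ` PS ks"
proof
  show "terminals_pos ks \<subseteq> (\<lambda>x. (x, sum_list ks - x)) ` PS ks"
    unfolding terminals_pos_def PS_def by blast
  show "(\<lambda>x. (x, sum_list ks - x)) ` PS ks \<subseteq> terminals_pos ks"
    unfolding terminals_pos_def PS_def by blast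
qed

lemma terminals_PS: "terminals ks = (\<lambda>x. (x, sum_list ks - x)) ` PS ks"
proof -
  have "terminals ks = (\<lambda>x. (x, sum_list (filter (\<lambda>x. 0 < x) ks) - x)) ` PS (filter (\<lambda>x. 0 < x) ks)"
    unfolding terminals_def terminals_pos_PS ..
  then show ?thesis unfolding PS_filter sum_filter .
qed

lemma sum_interleave: "length a = Suc (length b) \<Longrightarrow> sum_list (interleave a b) = sum_list a + sum_list b"
proof (induction b arbitrary: a)
  case Nil then show ?case by simp
next
  case (Cons b0 bs)
  then obtain a0 as where "a = a0 # as" "length as = Suc (length bs)" by (cases a) auto
  then show ?case using Cons.IH by simp
qed

definition fS :: "nat list \<Rightarrow> nat list \<Rightarrow> nat \<Rightarrow> nat" where
  "fS a b i = sum_list (take i a) + sum_list (take i b)"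
definition gS :: "nat list \<Rightarrow> nat list \<Rightarrow> nat \<Rightarrow> nat" where
  "gS a b i = sum_list (take (Suc i) a) + sum_list (take i b)"

lemma PS_interleave:
  "length a = Suc (length b) \<Longrightarrow> PS (interleave a b) = fS a b ` {..<length a} \<union> gS a b ` {..<length a}"
proof (induction b arbitrary: a)
  case Nil
  then obtain a0 where a: "a = [a0]" by (cases a) auto
  show ?case unfolding a by (simp add: PS_Cons fS_def gS_def lessThan_Suc insert_commute)
next
  case (Cons b0 bs)
  then obtain a0 as where a: "a = a0 # as" "length as = Suc (length bs)" by (cases a) auto
  have ih: "PS (interleave as bs) = fS as bs ` {..<length as} \<union> gS as bs ` {..<length as}"
    using Cons.IH a(2) .
  have f: "fS (a0#as) (b0#bs) (Suc j) = a0 + b0 + fS as bs j" for j unfolding fS_def by simp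
  have g: "gS (a0#as) (b0#bs) (Suc j) = a0 + b0 + gS as bs j" for j unfolding gS_def by simp
  have f0: "fS (a0#as) (b0#bs) 0 = 0" and g0: "gS (a0#as) (b0#bs) 0 = a0" unfolding fS_def gS_def by simp_all
  have "PS (interleave a (b0#bs)) = insert 0 (insert a0 ((+) (a0 + b0) ` PS (interleave as bs)))"
    unfolding a by (simp add: PS_Cons image_image add.assoc)
  also have "\<dots> = fS a (b0#bs) ` {..<length a} \<union> gS a (b0#bs) ` {..<length a}"
    unfolding ih a(1) using f g f0 g0
    by (simp add: lessThan_Suc_eq_insert_0 image_Un image_image insert_commute)
  finally show ?case .
qed




definition nn :: "nat list \<Rightarrow> nat \<Rightarrow> nat" where "nn ks l = sum_list (take l ks)"
definition Tpt :: "nat list \<Rightarrow> nat \<Rightarrow> vert" where "Tpt ks l = (nn ks l, sum_list ks - nn ks l)"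
definition Lp :: "nat list \<Rightarrow> nat \<Rightarrow> vert" where "Lp ks l = (nn ks l - 1, sum_list ks - nn ks l)"
definition Dp :: "nat list \<Rightarrow> nat \<Rightarrow> vert" where "Dp ks l = (nn ks l, sum_list ks - nn ks l - 1)"
definition Xw :: "nat list \<Rightarrow> (nat \<times> nat) list \<Rightarrow> (vert \<times> vert) set" where
  "Xw ks w = {(Lp ks l, Tpt ks l) | l. 1 \<le> l \<and> l \<le> length ks \<and> walpha w l = 1}
           \<union> {(Dp ks l, Tpt ks l) | l. l < length ks \<and> wbeta w l = 1}"
definition winv :: "nat list \<Rightarrow> (vert \<times> vert) set \<Rightarrow> (nat \<times> nat) list" where
  "winv ks X = map (\<lambda>l. (if (Lp ks l, Tpt ks l) \<in> X then 1 else 0, if (Dp ks l, Tpt ks l) \<in> X then 1 else 0))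
     [1..<length ks]"

lemma walpha_out: "l = 0 \<or> l \<ge> Suc (length w) \<Longrightarrow> walpha w l = 1" unfolding walpha_def by auto
lemma wbeta_out: "l = 0 \<or> l \<ge> Suc (length w) \<Longrightarrow> wbeta w l = 1" unfolding wbeta_def by auto

lemma wopt:
  assumes "w \<in> Wset m" "1 \<le> l" "l \<le> m"
  shows "(walpha w l = 1 \<and> wbeta w l = 0) \<or> (walpha w l = 0 \<and> wbeta w l = 1) \<or> (walpha w l = 1 \<and> wbeta w l = 1)"
proof -
  have lw: "length w = m" and sw: "set w \<subseteq> {(1,0),(0,1),(1,1)}" using assms(1) unfolding Wset_def by auto
  have "w ! (l - 1) \<in> set w" using assms lw by auto
  then have "w ! (l - 1) \<in> {(1,0),(0,1),(1,1)}" using sw by blast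
  then show ?thesis using assms lw unfolding walpha_def wbeta_def by auto
qed

lemma wle1:
  assumes "w \<in> Wset m"
  shows "walpha w l \<le> 1" "wbeta w l \<le> 1"
proof -
  have lw: "length w = m" using assms unfolding Wset_def by auto
  have "walpha w l \<le> 1 \<and> wbeta w l \<le> 1"
  proof (cases "1 \<le> l \<and> l \<le> m")
    case True then show ?thesis using wopt[OF assms, of l] by auto
  next
    case False then show ?thesis using lw unfolding walpha_def wbeta_def by auto
  qed
  then show "walpha w l \<le> 1" "wbeta w l \<le> 1" by auto
qed

context
  fixes ks :: "nat list" and s :: nat
  assumes s1: "s \<ge> 1" and len: "length ks = s" and pos: "\<forall>k\<in>set ks. k \<ge> 1"
begin

lemma nn_Suc: "l < s \<Longrightarrow> nn ks (Suc l) = nn ks l + ks ! l"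
  unfolding nn_def using len by (simp add: take_Suc_conv_app_nth)

lemma ks_pos: "l < s \<Longrightarrow> ks ! l \<ge> 1" using pos len by auto

lemma nn_less: "l < l' \<Longrightarrow> l' \<le> s \<Longrightarrow> nn ks l < nn ks l'"
proof (induction l' rule: less_induct)
  case (less l')
  then obtain j where j: "l' = Suc j" by (cases l') auto
  have "nn ks l' = nn ks j + ks ! j" using nn_Suc[of j] less.prems j by simp
  moreover have "ks ! j \<ge> 1" using ks_pos[of j] less.prems j by simp
  moreover have "nn ks l \<le> nn ks j"
  proof (cases "l = j")
    case False then show ?thesis using less.IH[of j] less.prems j by simp
  qed simp
  ultimately show ?case by simp
qed

lemma nn_0: "nn ks 0 = 0" unfolding nn_def by simp
lemma nn_s: "nn ks s = sum_list ks" unfolding nn_def using len by simp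

lemma nn_le: "l \<le> s \<Longrightarrow> nn ks l \<le> sum_list ks"
  using nn_less[of l s] nn_s by (cases "l = s") auto

lemma nn_ge1: "1 \<le> l \<Longrightarrow> l \<le> s \<Longrightarrow> nn ks l \<ge> 1"
  using nn_less[of 0 l] nn_0 by simp

lemma nn_lt: "l < s \<Longrightarrow> nn ks l < sum_list ks"
  using nn_less[of l s] nn_s by simp

lemma nn_inj: "l \<le> s \<Longrightarrow> l' \<le> s \<Longrightarrow> nn ks l = nn ks l' \<Longrightarrow> l = l'"
  using nn_less[of l l'] nn_less[of l' l] by (metis less_irrefl linorder_neqE_nat)

lemma Tpt_inj: "l \<le> s \<Longrightarrow> l' \<le> s \<Longrightarrow> Tpt ks l = Tpt ks l' \<Longrightarrow> l = l'"
  unfolding Tpt_def using nn_inj by auto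

lemma n_ge1: "sum_list ks \<ge> 1" using nn_ge1[of s] s1 nn_s by simp

lemma LD_ne: "Lp ks l \<noteq> Dp ks l"
  unfolding Lp_def Dp_def using n_ge1 by auto

lemma PS_ks: "PS ks = nn ks ` {..s}"
  unfolding PS_def nn_def using len by auto

lemma terminals_eq: "terminals ks = Tpt ks ` {..s}"
  unfolding terminals_PS PS_ks Tpt_def by auto

lemma card_T: "card (terminals ks) = Suc s"
proof -
  have "inj_on (Tpt ks) {..s}" using Tpt_inj by (auto simp: inj_on_def)
  then show ?thesis unfolding terminals_eq by (simp add: card_image)
qed

lemma anti_T: "anti (Suc (sum_list ks - 1)) (terminals ks)"
  unfolding anti_def terminals_eq Tpt_def sm_def using nn_le n_ge1 by auto

lemma T_ne: "terminals ks \<noteq> {}" unfolding terminals_eq by auto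

lemma qedge_T:
  assumes "qedge u (Tpt ks l)" "l \<le> s"
  shows "(u = Lp ks l \<and> 1 \<le> l) \<or> (u = Dp ks l \<and> l < s)"
proof -
  obtain a b where u: "u = (a,b)" by (cases u)
  have le: "nn ks l \<le> sum_list ks" using nn_le assms(2) .
  consider "nn ks l = a" "sum_list ks - nn ks l = Suc b" | "nn ks l = Suc a" "sum_list ks - nn ks l = b"
    using assms(1) unfolding qedge_def Tpt_def u by auto
  then show ?thesis
  proof cases
    case 1
    then have "l < s" using nn_s assms(2) by (cases "l = s") auto
    then show ?thesis using 1 u unfolding Dp_def by auto
  next
    case 2
    then have "1 \<le> l" using nn_0 by (cases "l = 0") auto
    then show ?thesis using 2 u unfolding Lp_def by auto
  qed
qed

lemma qedge_L: "1 \<le> l \<Longrightarrow> l \<le> s \<Longrightarrow> qedge (Lp ks l) (Tpt ks l)"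
  using nn_ge1[of l] unfolding qedge_def Lp_def Tpt_def by auto

lemma qedge_D: "l < s \<Longrightarrow> qedge (Dp ks l) (Tpt ks l)"
  using nn_lt[of l] unfolding qedge_def Dp_def Tpt_def by auto

lemma memL: "1 \<le> l \<Longrightarrow> l \<le> s \<Longrightarrow> (Lp ks l, Tpt ks l) \<in> Xw ks w \<longleftrightarrow> walpha w l = 1"
proof
  assume l: "1 \<le> l" "l \<le> s" and m: "(Lp ks l, Tpt ks l) \<in> Xw ks w"
  then consider l' where "Lp ks l = Lp ks l'" "Tpt ks l = Tpt ks l'" "1 \<le> l'" "l' \<le> s" "walpha w l' = 1"
    | l' where "Lp ks l = Dp ks l'" "Tpt ks l = Tpt ks l'" "l' < s"
    unfolding Xw_def using len by blast
  then show "walpha w l = 1"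
  proof cases
    case 1 then show ?thesis using Tpt_inj[of l l'] l by simp
  next
    case 2 then have "l = l'" using Tpt_inj[of l l'] l by simp
    then show ?thesis using 2 LD_ne by simp
  qed
next
  assume "1 \<le> l" "l \<le> s" "walpha w l = 1"
  then show "(Lp ks l, Tpt ks l) \<in> Xw ks w" unfolding Xw_def using len by blast
qed

lemma memD: "l < s \<Longrightarrow> (Dp ks l, Tpt ks l) \<in> Xw ks w \<longleftrightarrow> wbeta w l = 1"
proof
  assume l: "l < s" and m: "(Dp ks l, Tpt ks l) \<in> Xw ks w"
  then consider l' where "Dp ks l = Lp ks l'" "Tpt ks l = Tpt ks l'" "1 \<le> l'" "l' \<le> s"
    | l' where "Dp ks l = Dp ks l'" "Tpt ks l = Tpt ks l'" "l' < s" "wbeta w l' = 1"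
    unfolding Xw_def using len by blast
  then show "wbeta w l = 1"
  proof cases
    case 1 then have "l = l'" using Tpt_inj[of l l'] l by simp
    then show ?thesis using 1 LD_ne[of l] by metis
  next
    case 2 then show ?thesis using Tpt_inj[of l l'] l by simp
  qed
next
  assume "l < s" "wbeta w l = 1"
  then show "(Dp ks l, Tpt ks l) \<in> Xw ks w" unfolding Xw_def using len by blast
qed

lemma Xw_in:
  assumes w: "w \<in> Wset (s - 1)"
  shows "Xw ks w \<in> Xset (terminals ks)"
proof -
  have lw: "length w = s - 1" using w unfolding Wset_def by auto
  have "Xw ks w \<subseteq> inedges (terminals ks)"
    unfolding Xw_def inedges_def terminals_eq using len qedge_L qedge_D by auto
  moreover have "\<exists>u. (u,t) \<in> Xw ks w" if t: "t \<in> terminals ks" for t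
  proof -
    obtain l where l: "l \<le> s" "t = Tpt ks l" using t terminals_eq by auto
    show ?thesis
    proof (cases "l = 0")
      case True
      then have "(Dp ks l, Tpt ks l) \<in> Xw ks w" using memD[of l w] s1 wbeta_out by simp
      then show ?thesis using l by blast
    next
      case False
      show ?thesis
      proof (cases "l = s")
        case True
        then have "(Lp ks l, Tpt ks l) \<in> Xw ks w" using memL[of l w] s1 walpha_out[of l w] lw by simp
        then show ?thesis using l by blast
      next
        case False
        then have "l < s" "1 \<le> l" "l \<le> s - 1" using l \<open>l \<noteq> 0\<close> by auto
        then have "walpha w l = 1 \<or> wbeta w l = 1" using wopt[OF w] by blast
        then show ?thesis using memL[of l w] memD[of l w] \<open>l < s\<close> \<open>1 \<le> l\<close> l by blast
      qed
    qed
  qed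
  ultimately show ?thesis unfolding Xset_def by blast
qed

lemma winv_Xw:
  assumes w: "w \<in> Wset (s - 1)"
  shows "winv ks (Xw ks w) = w"
proof -
  have lw: "length w = s - 1" and sw: "set w \<subseteq> {(1,0),(0,1),(1,1)}" using w unfolding Wset_def by auto
  show ?thesis
  proof (rule nth_equalityI)
    show "length (winv ks (Xw ks w)) = length w" unfolding winv_def using len lw by simp
  next
    fix i assume i: "i < length (winv ks (Xw ks w))"
    then have i': "i < s - 1" unfolding winv_def using len by simp
    have a: "walpha w (Suc i) = fst (w ! i)" "wbeta w (Suc i) = snd (w ! i)"
      using i' lw unfolding walpha_def wbeta_def by simp_all
    have "w ! i \<in> set w" using i' lw by simp
    then have o: "w ! i \<in> {(1,0),(0,1),(1,1)}" using subsetD[OF sw] by simp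
    have e: "winv ks (Xw ks w) ! i = (if (Lp ks (Suc i), Tpt ks (Suc i)) \<in> Xw ks w then 1 else 0,
        if (Dp ks (Suc i), Tpt ks (Suc i)) \<in> Xw ks w then 1 else 0)"
      unfolding winv_def using i' len by (simp add: nth_map nth_upt)
    have m1: "(Lp ks (Suc i), Tpt ks (Suc i)) \<in> Xw ks w \<longleftrightarrow> fst (w ! i) = 1"
      using memL[of "Suc i" w] i' a(1) by simp
    have m2: "(Dp ks (Suc i), Tpt ks (Suc i)) \<in> Xw ks w \<longleftrightarrow> snd (w ! i) = 1"
      using memD[of "Suc i" w] i' a(2) by simp
    obtain x y where xy: "w ! i = (x,y)" by (cases "w ! i")
    show "winv ks (Xw ks w) ! i = w ! i"
      unfolding e m1 m2 using o xy by auto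
  qed
qed

lemma walpha_winv: "1 \<le> l \<Longrightarrow> l < s \<Longrightarrow> walpha (winv ks X) l = (if (Lp ks l, Tpt ks l) \<in> X then 1 else 0)"
  unfolding walpha_def winv_def using len by auto

lemma wbeta_winv: "1 \<le> l \<Longrightarrow> l < s \<Longrightarrow> wbeta (winv ks X) l = (if (Dp ks l, Tpt ks l) \<in> X then 1 else 0)"
  unfolding wbeta_def winv_def using len by auto

lemma len_winv: "length (winv ks X) = s - 1" unfolding winv_def using len by simp

lemma X_edge:
  assumes X: "X \<in> Xset (terminals ks)" and l: "l \<le> s"
  shows "(1 \<le> l \<and> (Lp ks l, Tpt ks l) \<in> X) \<or> (l < s \<and> (Dp ks l, Tpt ks l) \<in> X)"
proof -
  have "Tpt ks l \<in> terminals ks" using l terminals_eq by auto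
  then obtain u where u: "(u, Tpt ks l) \<in> X" using X unfolding Xset_def by blast
  then have "qedge u (Tpt ks l)" using X unfolding Xset_def inedges_def by auto
  then show ?thesis using qedge_T[OF _ l] u by blast
qed

lemma winv_in:
  assumes X: "X \<in> Xset (terminals ks)"
  shows "winv ks X \<in> Wset (s - 1)"
proof -
  have "set (winv ks X) \<subseteq> {(1,0),(0,1),(1,1)}"
  proof
    fix p assume "p \<in> set (winv ks X)"
    then obtain l where l: "l \<in> set [1..<s]"
      "p = (if (Lp ks l, Tpt ks l) \<in> X then 1 else 0, if (Dp ks l, Tpt ks l) \<in> X then 1 else 0)"
      unfolding winv_def using len by auto
    have "1 \<le> l" "l < s" using l(1) by auto
    then have "(Lp ks l, Tpt ks l) \<in> X \<or> (Dp ks l, Tpt ks l) \<in> X" using X_edge[OF X, of l] by auto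
    then show "p \<in> {(1,0),(0,1),(1,1)}" using l(2) by auto
  qed
  then show ?thesis unfolding Wset_def using len_winv by auto
qed

lemma Xw_winv:
  assumes X: "X \<in> Xset (terminals ks)"
  shows "Xw ks (winv ks X) = X"
proof
  let ?w = "winv ks X"
  have lw: "length ?w = s - 1" using len_winv .
  show "Xw ks ?w \<subseteq> X"
  proof
    fix e assume e: "e \<in> Xw ks ?w"
    have "(\<exists>l. e = (Lp ks l, Tpt ks l) \<and> 1 \<le> l \<and> l \<le> s \<and> walpha ?w l = 1)
      \<or> (\<exists>l. e = (Dp ks l, Tpt ks l) \<and> l < s \<and> wbeta ?w l = 1)"
      using e len unfolding Xw_def by blast
    then show "e \<in> X"
    proof
      assume "\<exists>l. e = (Lp ks l, Tpt ks l) \<and> 1 \<le> l \<and> l \<le> s \<and> walpha ?w l = 1"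
      then obtain l where 1: "e = (Lp ks l, Tpt ks l)" "1 \<le> l" "l \<le> s" "walpha ?w l = 1" by blast
      show ?thesis
      proof (cases "l < s")
        case True
        have "walpha ?w l = (if (Lp ks l, Tpt ks l) \<in> X then 1 else 0)"
          using walpha_winv[of l X] True 1(2) by blast
        then have "(Lp ks l, Tpt ks l) \<in> X" using 1(4) by (cases "(Lp ks l, Tpt ks l) \<in> X") simp_all
        then show ?thesis using 1(1) by simp
      next
        case False
        then have ls: "\<not> l < s" .
        have "(1 \<le> l \<and> (Lp ks l, Tpt ks l) \<in> X) \<or> (l < s \<and> (Dp ks l, Tpt ks l) \<in> X)"
          using X_edge[OF X 1(3)] .
        then have "(Lp ks l, Tpt ks l) \<in> X" using ls by blast
        then show ?thesis using 1(1) by simp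
      qed
    next
      assume "\<exists>l. e = (Dp ks l, Tpt ks l) \<and> l < s \<and> wbeta ?w l = 1"
      then obtain l where 2: "e = (Dp ks l, Tpt ks l)" "l < s" "wbeta ?w l = 1" by blast
      show ?thesis
      proof (cases "1 \<le> l")
        case True
        have "wbeta ?w l = (if (Dp ks l, Tpt ks l) \<in> X then 1 else 0)"
          using wbeta_winv[of l X] True 2(2) by blast
        then have "(Dp ks l, Tpt ks l) \<in> X" using 2(3) by (cases "(Dp ks l, Tpt ks l) \<in> X") simp_all
        then show ?thesis using 2(1) by simp
      next
        case False
        then have l0: "\<not> 1 \<le> l" .
        have "(1 \<le> l \<and> (Lp ks l, Tpt ks l) \<in> X) \<or> (l < s \<and> (Dp ks l, Tpt ks l) \<in> X)"
          using X_edge[OF X, of l] 2(2) by simp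
        then have "(Dp ks l, Tpt ks l) \<in> X" using l0 by blast
        then show ?thesis using 2(1) by simp
      qed
    qed
  qed
  show "X \<subseteq> Xw ks ?w"
  proof
    fix e assume e: "e \<in> X"
    obtain u t where ut: "e = (u,t)" by (cases e)
    have tT: "t \<in> terminals ks" and q: "qedge u t"
      using X e ut unfolding Xset_def inedges_def by auto
    obtain l where l: "l \<le> s" "t = Tpt ks l" using tT terminals_eq by auto
    have q': "qedge u (Tpt ks l)" using q l(2) by simp
    have "(u = Lp ks l \<and> 1 \<le> l) \<or> (u = Dp ks l \<and> l < s)" using qedge_T[OF q' l(1)] .
    then show "e \<in> Xw ks ?w"
    proof
      assume a: "u = Lp ks l \<and> 1 \<le> l"
      have inX: "(Lp ks l, Tpt ks l) \<in> X" using e ut l(2) a by simp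
      have "walpha ?w l = 1"
      proof (cases "l < s")
        case True
        have "walpha ?w l = (if (Lp ks l, Tpt ks l) \<in> X then 1 else 0)"
          using walpha_winv[of l X] True a by blast
        then show ?thesis using inX by simp
      next
        case False
        then have "l \<ge> Suc (length ?w)" using lw s1 by simp
        then show ?thesis using walpha_out[of l ?w] by blast
      qed
      then have "(Lp ks l, Tpt ks l) \<in> Xw ks ?w" using memL[of l ?w] a l(1) by blast
      then show ?thesis using ut l(2) a by simp
    next
      assume a: "u = Dp ks l \<and> l < s"
      have inX: "(Dp ks l, Tpt ks l) \<in> X" using e ut l(2) a by simp
      have "wbeta ?w l = 1"
      proof (cases "1 \<le> l")
        case True
        have "wbeta ?w l = (if (Dp ks l, Tpt ks l) \<in> X then 1 else 0)"
          using wbeta_winv[of l X] True a by blast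
        then show ?thesis using inX by simp
      next
        case False
        then have "l = 0" by simp
        then show ?thesis using wbeta_out[of l ?w] by blast
      qed
      then have "(Dp ks l, Tpt ks l) \<in> Xw ks ?w" using memD[of l ?w] a by blast
      then show ?thesis using ut l(2) a by simp
    qed
  qed
qed


lemma r_len: "length (rw w ks) = s" unfolding rw_def using len by simp
lemma wt_len: "length (wtilde w) = length w" unfolding wtilde_def by simp

lemma r_nth:
  assumes i: "i < s"
  shows "rw w ks ! i = ks ! i + 1 - walpha w (Suc i) - wbeta w i"
proof -
  have u: "[1..<Suc s] ! i = Suc i" using nth_upt[of 1 i "Suc s"] i by simp
  have "rw w ks ! i = (\<lambda>i. ks ! (i - 1) + 1 - walpha w i - wbeta w (i - 1)) ([1..<Suc s] ! i)"
    unfolding rw_def len by (rule nth_map) (use i in simp)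
  then show ?thesis unfolding u by simp
qed

lemma wt_nth:
  assumes "i < length w"
  shows "wtilde w ! i = walpha w (Suc i) * wbeta w (Suc i)"
proof -
  obtain a b where ab: "w ! i = (a,b)" by (cases "w ! i")
  show ?thesis unfolding wtilde_def walpha_def wbeta_def using assms ab by simp
qed

lemma AB:
  assumes w: "w \<in> Wset (s - 1)"
  shows "i < s \<Longrightarrow> fS (rw w ks) (wtilde w) i + 1 = nn ks i + wbeta w i
     \<and> gS (rw w ks) (wtilde w) i + walpha w (Suc i) = nn ks (Suc i)"
proof (induction i)
  let ?r = "rw w ks" and ?t = "wtilde w"
  have lw: "length w = s - 1" using w unfolding Wset_def by auto
  have BA: "gS ?r ?t j + walpha w (Suc j) = nn ks (Suc j)"
    if j: "j < s" and A: "fS ?r ?t j + 1 = nn ks j + wbeta w j" for j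
  proof -
    have g: "gS ?r ?t j = fS ?r ?t j + ?r ! j"
      unfolding gS_def fS_def using j r_len[of w] by (simp add: take_Suc_conv_app_nth)
    have k: "ks ! j \<ge> 1" using ks_pos j by simp
    have a: "walpha w (Suc j) \<le> 1" "wbeta w j \<le> 1" using wle1[OF w] by auto
    have rr: "?r ! j + walpha w (Suc j) + wbeta w j = ks ! j + 1" using r_nth[OF j] k a by simp
    show ?thesis using g rr A nn_Suc[OF j] by simp
  qed
  {
    case 0
    have A0: "fS ?r ?t 0 + 1 = nn ks 0 + wbeta w 0"
      unfolding fS_def nn_def using wbeta_out[of 0 w] by simp
    show ?case using A0 BA[OF 0 A0] by simp
  next
    case (Suc i)
    then have IH: "gS ?r ?t i + walpha w (Suc i) = nn ks (Suc i)" using Suc.IH by simp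
    have i': "i < length w" using Suc.prems lw by simp
    have f: "fS ?r ?t (Suc i) = gS ?r ?t i + ?t ! i"
      unfolding gS_def fS_def using i' wt_len[of w] by (simp add: take_Suc_conv_app_nth)
    have "Suc i \<le> s - 1" using Suc.prems by simp
    then have "(walpha w (Suc i) = 1 \<and> wbeta w (Suc i) = 0) \<or> (walpha w (Suc i) = 0 \<and> wbeta w (Suc i) = 1)
      \<or> (walpha w (Suc i) = 1 \<and> wbeta w (Suc i) = 1)" using wopt[OF w, of "Suc i"] by simp
    then have o: "walpha w (Suc i) * wbeta w (Suc i) + 1 = walpha w (Suc i) + wbeta w (Suc i)"
      by (elim disjE) auto
    have A: "fS ?r ?t (Suc i) + 1 = nn ks (Suc i) + wbeta w (Suc i)"
      using f wt_nth[OF i'] o IH by simp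
    show ?case using A BA[OF Suc.prems A] by simp
  }
qed

lemma sum_red:
  assumes w: "w \<in> Wset (s - 1)"
  shows "sum_list (interleave (rw w ks) (wtilde w)) = sum_list ks - 1"
proof -
  have lw: "length w = s - 1" using w unfolding Wset_def by auto
  have ls: "length (rw w ks) = Suc (length (wtilde w))" using r_len wt_len lw s1 by simp
  have "sum_list (interleave (rw w ks) (wtilde w)) = gS (rw w ks) (wtilde w) (s - 1)"
    unfolding sum_interleave[OF ls] gS_def using r_len[of w] wt_len[of w] lw s1 by simp
  moreover have "gS (rw w ks) (wtilde w) (s - 1) + walpha w s = nn ks s"
    using AB[OF w, of "s - 1"] s1 by simp
  moreover have "walpha w s = 1" using walpha_out[of s w] lw s1 by simp
  ultimately show ?thesis using nn_s by simp
qed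

lemma fst_Xw:
  assumes w: "w \<in> Wset (s - 1)"
  shows "fst ` Xw ks w = terminals (interleave (rw w ks) (wtilde w))"
proof -
  let ?r = "rw w ks" and ?t = "wtilde w" and ?n = "sum_list ks"
  have lw: "length w = s - 1" using w unfolding Wset_def by auto
  have ls: "length ?r = Suc (length ?t)" using r_len wt_len lw s1 by simp
  have T: "terminals (interleave ?r ?t) = (\<lambda>x. (x, (?n - 1) - x)) ` (fS ?r ?t ` {..<s} \<union> gS ?r ?t ` {..<s})"
    unfolding terminals_PS PS_interleave[OF ls] sum_red[OF w] r_len ..
  have FX: "fst ` Xw ks w = Lp ks ` {l. 1 \<le> l \<and> l \<le> s \<and> walpha w l = 1} \<union> Dp ks ` {l. l < s \<and> wbeta w l = 1}"
    unfolding Xw_def using len by force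
  have n1: "?n \<ge> 1" using n_ge1 .
  show ?thesis
    unfolding T FX
  proof
    show "Lp ks ` {l. 1 \<le> l \<and> l \<le> s \<and> walpha w l = 1} \<union> Dp ks ` {l. l < s \<and> wbeta w l = 1}
      \<subseteq> (\<lambda>x. (x, ?n - 1 - x)) ` (fS ?r ?t ` {..<s} \<union> gS ?r ?t ` {..<s})"
    proof
      fix p assume "p \<in> Lp ks ` {l. 1 \<le> l \<and> l \<le> s \<and> walpha w l = 1} \<union> Dp ks ` {l. l < s \<and> wbeta w l = 1}"
      then consider l where "p = Lp ks l" "1 \<le> l" "l \<le> s" "walpha w l = 1"
        | l where "p = Dp ks l" "l < s" "wbeta w l = 1" by blast
      then show "p \<in> (\<lambda>x. (x, ?n - 1 - x)) ` (fS ?r ?t ` {..<s} \<union> gS ?r ?t ` {..<s})"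
      proof cases
        case 1
        obtain i where i: "l = Suc i" using 1(2) by (cases l) auto
        have "gS ?r ?t i + 1 = nn ks l" using AB[OF w, of i] 1 i by simp
        moreover have "nn ks l \<le> ?n" using nn_le 1(3) by simp
        ultimately have "p = (\<lambda>x. (x, ?n - 1 - x)) (gS ?r ?t i)" using 1(1) unfolding Lp_def by auto
        moreover have "i < s" using i 1(3) by simp
        ultimately show ?thesis by blast
      next
        case 2
        have "fS ?r ?t l = nn ks l" using AB[OF w, of l] 2 by simp
        moreover have "nn ks l < ?n" using nn_lt 2(2) by simp
        ultimately have "p = (\<lambda>x. (x, ?n - 1 - x)) (fS ?r ?t l)" using 2(1) unfolding Dp_def by auto
        then show ?thesis using 2(2) by blast
      qed
    qed
  next
    show "(\<lambda>x. (x, ?n - 1 - x)) ` (fS ?r ?t ` {..<s} \<union> gS ?r ?t ` {..<s})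
      \<subseteq> Lp ks ` {l. 1 \<le> l \<and> l \<le> s \<and> walpha w l = 1} \<union> Dp ks ` {l. l < s \<and> wbeta w l = 1}"
    proof
      fix p assume "p \<in> (\<lambda>x. (x, ?n - 1 - x)) ` (fS ?r ?t ` {..<s} \<union> gS ?r ?t ` {..<s})"
      then consider i where "i < s" "p = (fS ?r ?t i, ?n - 1 - fS ?r ?t i)"
        | i where "i < s" "p = (gS ?r ?t i, ?n - 1 - gS ?r ?t i)" by blast
      then show "p \<in> Lp ks ` {l. 1 \<le> l \<and> l \<le> s \<and> walpha w l = 1} \<union> Dp ks ` {l. l < s \<and> wbeta w l = 1}"
      proof cases
        case 1
        have A: "fS ?r ?t i + 1 = nn ks i + wbeta w i" using AB[OF w 1(1)] by simp
        have lt: "nn ks i < ?n" using nn_lt 1(1) by simp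
        show ?thesis
        proof (cases "wbeta w i = 1")
          case True
          then have "p = Dp ks i" using A 1(2) lt unfolding Dp_def by auto
          then show ?thesis using True 1(1) by blast
        next
          case False
          have i0: "i \<noteq> 0"
          proof
            assume "i = 0"
            then have "wbeta w i = 1" using wbeta_out[of i w] by simp
            then show False using False by simp
          qed
          then have "1 \<le> i" "i \<le> s - 1" using 1(1) by auto
          then have ab: "walpha w i = 1" "wbeta w i = 0" using wopt[OF w, of i] False by auto
          have ge: "nn ks i \<ge> 1" using nn_ge1[of i] i0 1(1) by simp
          have "p = Lp ks i" using A ab 1(2) ge lt unfolding Lp_def by auto
          then show ?thesis using ab \<open>1 \<le> i\<close> 1(1) by auto
        qed
      next
        case 2
        have B: "gS ?r ?t i + walpha w (Suc i) = nn ks (Suc i)" using AB[OF w 2(1)] by simp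
        have le: "nn ks (Suc i) \<le> ?n" using nn_le 2(1) by simp
        have ge: "nn ks (Suc i) \<ge> 1" using nn_ge1[of "Suc i"] 2(1) by simp
        show ?thesis
        proof (cases "walpha w (Suc i) = 1")
          case True
          then have "p = Lp ks (Suc i)" using B 2(2) le ge unfolding Lp_def by auto
          then show ?thesis using True 2(1) by force
        next
          case False
          then have "Suc i < s" using walpha_out[of "Suc i" w] lw 2(1) by (cases "Suc i = s") auto
          then have ab: "walpha w (Suc i) = 0" "wbeta w (Suc i) = 1" using wopt[OF w, of "Suc i"] False by auto
          have lt: "nn ks (Suc i) < ?n" using nn_lt \<open>Suc i < s\<close> by simp
          have "p = Dp ks (Suc i)" using B ab 2(2) lt unfolding Dp_def by auto
          then show ?thesis using ab \<open>Suc i < s\<close> by blast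
        qed
      qed
    qed
  qed
qed


lemma card_Xw:
  assumes w: "w \<in> Wset (s - 1)"
  shows "card (Xw ks w) = Suc s + wsize w"
proof -
  have lw: "length w = s - 1" using w unfolding Wset_def by auto
  define A where "A = {l \<in> {1..s}. walpha w l = 1}"
  define B where "B = {l \<in> {..<s}. wbeta w l = 1}"
  have XAB: "Xw ks w = (\<lambda>l. (Lp ks l, Tpt ks l)) ` A \<union> (\<lambda>l. (Dp ks l, Tpt ks l)) ` B"
    unfolding Xw_def A_def B_def using len by auto
  have injA: "inj_on (\<lambda>l. (Lp ks l, Tpt ks l)) A"
    unfolding inj_on_def A_def using Tpt_inj by auto
  have injB: "inj_on (\<lambda>l. (Dp ks l, Tpt ks l)) B"
    unfolding inj_on_def B_def using Tpt_inj by auto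
  have disj: "(\<lambda>l. (Lp ks l, Tpt ks l)) ` A \<inter> (\<lambda>l. (Dp ks l, Tpt ks l)) ` B = {}"
  proof (rule ccontr)
    assume "(\<lambda>l. (Lp ks l, Tpt ks l)) ` A \<inter> (\<lambda>l. (Dp ks l, Tpt ks l)) ` B \<noteq> {}"
    then obtain x where "x \<in> (\<lambda>l. (Lp ks l, Tpt ks l)) ` A" "x \<in> (\<lambda>l. (Dp ks l, Tpt ks l)) ` B" by blast
    then obtain l l' where l0: "l \<in> A" "l' \<in> B" "(Lp ks l, Tpt ks l) = (Dp ks l', Tpt ks l')" by blast
    then have ll: "l \<in> A" "l' \<in> B" "Lp ks l = Dp ks l'" "Tpt ks l = Tpt ks l'" by auto
    have "l = l'" using Tpt_inj[OF _ _ ll(4)] ll(1,2) unfolding A_def B_def by auto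
    then show False using ll(3) LD_ne[of l] by simp
  qed
  have fA: "finite A" and fB: "finite B" unfolding A_def B_def by auto
  have cX: "card (Xw ks w) = card A + card B"
    unfolding XAB using card_Un_disjoint[OF finite_imageI[OF fA] finite_imageI[OF fB] disj]
      card_image[OF injA] card_image[OF injB] by simp
  have ci: "card {l \<in> S. f l = 1} = sum f S" if "finite S" "\<forall>l\<in>S. f l \<le> (1::nat)" for S f
  proof -
    have "card {l \<in> S. f l = 1} = (\<Sum>l\<in>S. if f l = 1 then 1 else 0)"
      using sum.inter_filter[OF that(1), of "\<lambda>_. (1::nat)" "\<lambda>l. f l = 1"] by simp
    also have "\<dots> = sum f S"
    proof (rule sum.cong)
      fix l assume "l \<in> S"
      then have "f l \<le> 1" using that(2) by blast
      then show "(if f l = 1 then 1 else 0) = f l" by auto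
    qed simp
    finally show ?thesis .
  qed
  have cA: "card A = sum (walpha w) {1..s}" unfolding A_def using ci[of "{1..s}" "walpha w"] wle1[OF w] by simp
  have cB: "card B = sum (wbeta w) {..<s}" unfolding B_def using ci[of "{..<s}" "wbeta w"] wle1[OF w] by simp
  have sA: "sum (walpha w) {1..s} = sum (walpha w) {1..<s} + 1"
  proof -
    have "sum (walpha w) {1..s} = sum (walpha w) {1..<Suc s}"
      by (simp add: atLeastLessThanSuc_atLeastAtMost)
    also have "\<dots> = sum (walpha w) {1..<s} + walpha w s" using sum.atLeastLessThan_Suc[of 1 s] s1 by simp
    finally show ?thesis using walpha_out[of s w] lw s1 by simp
  qed
  have sB: "sum (wbeta w) {..<s} = 1 + sum (wbeta w) {1..<s}"
  proof -
    have "sum (wbeta w) {..<s} = sum (wbeta w) {0..<s}" by (simp add: atLeast0LessThan)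
    also have "\<dots> = wbeta w 0 + sum (wbeta w) {Suc 0..<s}" using sum.atLeast_Suc_lessThan[of 0 s] s1 by simp
    finally show ?thesis using wbeta_out[of 0 w] by simp
  qed
  have sAB: "sum (walpha w) {1..<s} + sum (wbeta w) {1..<s} = (s - 1) + (\<Sum>l\<in>{1..<s}. walpha w l * wbeta w l)"
  proof -
    have "sum (walpha w) {1..<s} + sum (wbeta w) {1..<s} = (\<Sum>l\<in>{1..<s}. walpha w l + wbeta w l)"
      by (simp add: sum.distrib)
    also have "\<dots> = (\<Sum>l\<in>{1..<s}. 1 + walpha w l * wbeta w l)"
    proof (rule sum.cong)
      fix l assume "l \<in> {1..<s}"
      then have "1 \<le> l" "l \<le> s - 1" by auto
      then have "(walpha w l = 1 \<and> wbeta w l = 0) \<or> (walpha w l = 0 \<and> wbeta w l = 1)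
        \<or> (walpha w l = 1 \<and> wbeta w l = 1)" using wopt[OF w] by blast
      then show "walpha w l + wbeta w l = 1 + walpha w l * wbeta w l" by (elim disjE) auto
    qed simp
    also have "\<dots> = (s - 1) + (\<Sum>l\<in>{1..<s}. walpha w l * wbeta w l)" unfolding sum.distrib by simp
    finally show ?thesis .
  qed
  have ws: "wsize w = (\<Sum>l\<in>{1..<s}. walpha w l * wbeta w l)"
  proof -
    have "wsize w = (\<Sum>i = 0..<length w. wtilde w ! i)"
      unfolding wsize_def sum_list_sum_nth wt_len ..
    also have "\<dots> = (\<Sum>i = 0..<s - 1. walpha w (Suc i) * wbeta w (Suc i))"
      using wt_nth lw by (intro sum.cong) auto
    also have "\<dots> = (\<Sum>l = Suc 0..<Suc (s - 1). walpha w l * wbeta w l)"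
      by (rule sum.shift_bounds_Suc_ivl[symmetric])
    finally show ?thesis using s1 by simp
  qed
  show ?thesis using cX cA cB sA sB sAB ws s1 by simp
qed

lemma main:
  "fpoly ks = (\<Sum>w\<in>Wset (s - 1). fpoly (interleave (rw w ks) (wtilde w)) * monom 1 (wsize w))"
proof -
  let ?T = "terminals ks"
  have "fpoly ks = (\<Sum>X\<in>Xset ?T. fpolyT (fst ` X) * monom 1 (card X - card ?T))"
    unfolding fpoly_eq using decomp[OF anti_T T_ne] .
  also have "\<dots> = (\<Sum>w\<in>Wset (s - 1). fpoly (interleave (rw w ks) (wtilde w)) * monom 1 (wsize w))"
  proof (rule sum.reindex_bij_witness[symmetric, of _ "winv ks" "Xw ks"])
    fix a assume a: "a \<in> Wset (s - 1)"
    show "winv ks (Xw ks a) = a" using winv_Xw[OF a] .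
    show "Xw ks a \<in> Xset ?T" using Xw_in[OF a] .
    show "fpolyT (fst ` Xw ks a) * monom 1 (card (Xw ks a) - card ?T)
        = fpoly (interleave (rw a ks) (wtilde a)) * monom 1 (wsize a)"
      using fst_Xw[OF a] card_Xw[OF a] card_T fpoly_eq by simp
  next
    fix b assume b: "b \<in> Xset ?T"
    show "Xw ks (winv ks b) = b" using Xw_winv[OF b] .
    show "winv ks b \<in> Wset (s - 1)" using winv_in[OF b] .
  qed
  finally show ?thesis .
qed

end

theorem lemma3p5:
  fixes ks :: "nat list" and s :: nat
  assumes "s \<ge> 1" and "length ks = s" and "\<forall>k\<in>set ks. k \<ge> 1"
  shows "fpoly ks =
    (\<Sum>w\<in>Wset (s - 1). fpoly (interleave (rw w ks) (wtilde w)) * monom 1 (wsize w))"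
  using main[OF assms] .

end
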